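(* Let $\mathcal E=\widetilde{\Omega^1_D}(\mathcal A)$ be the bimodule of one-forms of a spectral triple $(\mathcal A,\mathcal H,D)$. Suppose $\mathcal E$ is free of finite rank as a right $\mathcal A$-module, $\mathcal E=\mathbb C^n\otimes_{\mathbb C}\mathcal A$, with left module structure $a(e_i\otimes b)=e_i\otimes ab$ for a basis $e_1,\dots,e_n$ of $\mathbb C^n$ and $a,b\in\mathcal A$. Then $\mathcal E$ satisfies Assumption III.
   Context: $\mathcal E$ is the span in $B(\mathcal H)$ of $a[D,b]$; $\mathcal Z(\mathcal E)=\{e:ea=ae\ \forall a\in\mathcal A\}$, $\mathcal Z(\mathcal A)$ the center of $\mathcal A$. Assumption III: $\mathcal Z(\mathcal E)$ is finitely generated projective over $\mathcal Z(\mathcal A)$ and the map $\mathcal Z(\mathcal E)\otimes_{\mathcal Z(\mathcal A)}\mathcal A\to\mathcal E$, $e\otimes a\mapsto ea$, is an isomorphism of vector spaces. *)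

theory Defs
  imports Complex_Main
begin

text \<open>A unital complex algebra is modelled as a ring 'b (playing the role of B(H))
 together with a central unital ring homomorphism sc from the complex numbers;
 complex scalar multiplication is c . x = sc c * x.\<close>
definition cplx_algebra :: "(complex \<Rightarrow> 'b::ring_1) \<Rightarrow> bool" where
  "cplx_algebra sc \<longleftrightarrow>
     (\<forall>c d. sc (c + d) = sc c + sc d) \<and> (\<forall>c d. sc (c * d) = sc c * sc d) \<and>
     sc 1 = 1 \<and> (\<forall>c x. sc c * x = x * sc c)"

definition cplx_subalgebra :: "(complex \<Rightarrow> 'b::ring_1) \<Rightarrow> 'b set \<Rightarrow> bool" where
  "cplx_subalgebra sc A \<longleftrightarrow> 1 \<in> A \<and>
     (\<forall>a\<in>A. \<forall>b\<in>A. a + b \<in> A \<and> a * b \<in> A) \<and> (\<forall>c. \<forall>a\<in>A. sc c * a \<in> A)"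

text \<open>Abstraction of b \<mapsto> [D,b]: a complex-linear derivation from A into the ambient algebra.\<close>
definition cderivation :: "(complex \<Rightarrow> 'b::ring_1) \<Rightarrow> 'b set \<Rightarrow> ('b \<Rightarrow> 'b) \<Rightarrow> bool" where
  "cderivation sc A \<delta> \<longleftrightarrow>
     (\<forall>a\<in>A. \<forall>b\<in>A. \<delta> (a + b) = \<delta> a + \<delta> b \<and> \<delta> (a * b) = \<delta> a * b + a * \<delta> b) \<and>
     (\<forall>c. \<forall>a\<in>A. \<delta> (sc c * a) = sc c * \<delta> a)"

definition one_forms :: "(complex \<Rightarrow> 'b::ring_1) \<Rightarrow> 'b set \<Rightarrow> ('b \<Rightarrow> 'b) \<Rightarrow> 'b set" where
  "one_forms sc A \<delta> = {x. \<exists>(m::nat) c a b. (\<forall>k<m. a k \<in> A \<and> b k \<in> A) \<and>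
                          x = (\<Sum>k<m. sc (c k) * (a k * \<delta> (b k)))}"

text \<open>n-tuples with entries in S (indices 0..n-1, zero elsewhere).\<close>
definition tuples :: "'b::zero set \<Rightarrow> nat \<Rightarrow> (nat \<Rightarrow> 'b) set" where
  "tuples S n = {f. (\<forall>i<n. f i \<in> S) \<and> (\<forall>i\<ge>n. f i = 0)}"

text \<open>E is isomorphic, as an A-bimodule (and complex vector space), to C^n \<otimes> A = A^n,
 where the right action is (e_i \<otimes> b) a = e_i \<otimes> b a and the left action is
 a (e_i \<otimes> b) = e_i \<otimes> a b.\<close>
definition free_std_bimodule :: "(complex \<Rightarrow> 'b::ring_1) \<Rightarrow> 'b set \<Rightarrow> 'b set \<Rightarrow> nat \<Rightarrow> bool" where
  "free_std_bimodule sc A E n \<longleftrightarrow> (\<exists>\<Phi>. bij_betw \<Phi> (tuples A n) E \<and>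
     (\<forall>f\<in>tuples A n. \<forall>g\<in>tuples A n. \<Phi> (\<lambda>i. f i + g i) = \<Phi> f + \<Phi> g) \<and>
     (\<forall>f\<in>tuples A n. \<forall>c. \<Phi> (\<lambda>i. sc c * f i) = sc c * \<Phi> f) \<and>
     (\<forall>f\<in>tuples A n. \<forall>a\<in>A. \<Phi> f * a = \<Phi> (\<lambda>i. f i * a)) \<and>
     (\<forall>f\<in>tuples A n. \<forall>a\<in>A. a * \<Phi> f = \<Phi> (\<lambda>i. a * f i)))"

text \<open>Z(E) = {e in E. ea = ae for all a in A}; with E = A this is the centre Z(A).\<close>
definition centraliser :: "'b::ring_1 set \<Rightarrow> 'b set \<Rightarrow> 'b set" where
  "centraliser E A = {e\<in>E. \<forall>a\<in>A. e * a = a * e}"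

text \<open>M (a right R-module under the ambient multiplication, R commutative) is finitely
 generated projective: a direct summand (retract, via R-linear maps) of a free module R^m.\<close>
definition fg_projective :: "'b::ring_1 set \<Rightarrow> 'b set \<Rightarrow> bool" where
  "fg_projective R M \<longleftrightarrow> (\<exists>(m::nat) \<iota> \<pi>.
     (\<forall>x\<in>M. \<iota> x \<in> tuples R m) \<and> (\<forall>f\<in>tuples R m. \<pi> f \<in> M) \<and>
     (\<forall>x\<in>M. \<forall>y\<in>M. \<iota> (x + y) = (\<lambda>i. \<iota> x i + \<iota> y i)) \<and>
     (\<forall>x\<in>M. \<forall>z\<in>R. \<iota> (x * z) = (\<lambda>i. \<iota> x i * z)) \<and>
     (\<forall>f\<in>tuples R m. \<forall>g\<in>tuples R m. \<pi> (\<lambda>i. f i + g i) = \<pi> f + \<pi> g) \<and>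
     (\<forall>f\<in>tuples R m. \<forall>z\<in>R. \<pi> (\<lambda>i. f i * z) = \<pi> f * z) \<and>
     (\<forall>x\<in>M. \<pi> (\<iota> x) = x))"

text \<open>Tensor product M \<otimes>_R A as the free complex vector space on M \<times> A (finitely supported
 functions) modulo the subspace spanned by the bilinearity and R-balancedness relations.\<close>
definition free_vs :: "'b set \<Rightarrow> 'b set \<Rightarrow> ('b \<times> 'b \<Rightarrow> complex) set" where
  "free_vs M A = {f. finite {p. f p \<noteq> 0} \<and> {p. f p \<noteq> 0} \<subseteq> M \<times> A}"

definition pt :: "'b \<times> 'b \<Rightarrow> ('b \<times> 'b \<Rightarrow> complex)" where
  "pt p = (\<lambda>q. if q = p then 1 else 0)"

definition tensor_rels :: "(complex \<Rightarrow> 'b::ring_1) \<Rightarrow> 'b set \<Rightarrow> 'b set \<Rightarrow> 'b set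
    \<Rightarrow> ('b \<times> 'b \<Rightarrow> complex) set" where
  "tensor_rels sc R M A =
     {(\<lambda>q. pt (e + e', a) q - pt (e, a) q - pt (e', a) q) | e e' a. e \<in> M \<and> e' \<in> M \<and> a \<in> A} \<union>
     {(\<lambda>q. pt (e, a + a') q - pt (e, a) q - pt (e, a') q) | e a a'. e \<in> M \<and> a \<in> A \<and> a' \<in> A} \<union>
     {(\<lambda>q. pt (sc c * e, a) q - c * pt (e, a) q) | c e a. e \<in> M \<and> a \<in> A} \<union>
     {(\<lambda>q. pt (e, sc c * a) q - c * pt (e, a) q) | c e a. e \<in> M \<and> a \<in> A} \<union>
     {(\<lambda>q. pt (e * z, a) q - pt (e, z * a) q) | e z a. e \<in> M \<and> z \<in> R \<and> a \<in> A}"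

definition tensor_rel_span :: "(complex \<Rightarrow> 'b::ring_1) \<Rightarrow> 'b set \<Rightarrow> 'b set \<Rightarrow> 'b set
    \<Rightarrow> ('b \<times> 'b \<Rightarrow> complex) set" where
  "tensor_rel_span sc R M A = {f. \<exists>(m::nat) c g. (\<forall>k<m. g k \<in> tensor_rels sc R M A) \<and>
      f = (\<lambda>q. \<Sum>k<m. c k * g k q)}"

definition mult_map :: "(complex \<Rightarrow> 'b::ring_1) \<Rightarrow> ('b \<times> 'b \<Rightarrow> complex) \<Rightarrow> 'b" where
  "mult_map sc f = (\<Sum>p\<in>{p. f p \<noteq> 0}. sc (f p) * (fst p * snd p))"

text \<open>The map M \<otimes>_R A \<rightarrow> E, e \<otimes> a \<mapsto> e a, is a (linear) bijection: it is onto E, and its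
 kernel on the free space is exactly the relation subspace.\<close>
definition tensor_map_iso :: "(complex \<Rightarrow> 'b::ring_1) \<Rightarrow> 'b set \<Rightarrow> 'b set \<Rightarrow> 'b set \<Rightarrow> 'b set \<Rightarrow> bool" where
  "tensor_map_iso sc R M A E \<longleftrightarrow>
     mult_map sc ` free_vs M A = E \<and>
     (\<forall>f\<in>free_vs M A. mult_map sc f = 0 \<longrightarrow> f \<in> tensor_rel_span sc R M A)"

definition assumption_III :: "(complex \<Rightarrow> 'b::ring_1) \<Rightarrow> 'b set \<Rightarrow> 'b set \<Rightarrow> bool" where
  "assumption_III sc A E \<longleftrightarrow>
     fg_projective (centraliser A A) (centraliser E A) \<and>
     tensor_map_iso sc (centraliser A A) (centraliser E A) A E"

end

theory Submission
  imports Defs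
begin

lemma sc_zero: "cplx_algebra sc \<Longrightarrow> sc 0 = 0"
proof -
  assume a: "cplx_algebra sc"
  have "sc (0+0) = sc 0 + sc 0" using a unfolding cplx_algebra_def by blast
  thus ?thesis by (metis add_0_left add_cancel_right_right)
qed

lemma sc_central: "cplx_algebra sc \<Longrightarrow> sc c * x = x * sc c"
  unfolding cplx_algebra_def by blast

lemma sc_add: "cplx_algebra sc \<Longrightarrow> sc (c + d) = sc c + sc d"
  unfolding cplx_algebra_def by blast

lemma sc_mult: "cplx_algebra sc \<Longrightarrow> sc (c * d) = sc c * sc d"
  unfolding cplx_algebra_def by blast

lemma sc_sum: "cplx_algebra sc \<Longrightarrow> sc (sum c S) = (\<Sum>j\<in>S. sc (c j))"
proof (induct S rule: infinite_finite_induct)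
  case (infinite A) thus ?case by (simp add: sc_zero)
next
  case empty thus ?case by (simp add: sc_zero)
next
  case (insert x F) thus ?case by (simp add: sc_add)
qed

lemma mm_super: "cplx_algebra sc \<Longrightarrow> finite S \<Longrightarrow> {p. f p \<noteq> 0} \<subseteq> S \<Longrightarrow>
   mult_map sc f = (\<Sum>p\<in>S. sc (f p) * (fst p * snd p))"
  unfolding mult_map_def by (rule sum.mono_neutral_left) (auto simp: sc_zero)

lemma mm_lin:
  assumes a: "cplx_algebra sc" and J: "finite J"
  shows "mult_map sc (\<lambda>q. \<Sum>j\<in>J. c j * pt (p j) q) = (\<Sum>j\<in>J. sc (c j) * (fst (p j) * snd (p j)))"
proof -
  let ?G = "\<lambda>q. \<Sum>j\<in>J. c j * pt (p j) q"
  have G: "?G q = sum c {j\<in>J. p j = q}" for q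
    unfolding pt_def sum.inter_filter[OF J] by (rule sum.cong) auto
  have sup: "{q. ?G q \<noteq> 0} \<subseteq> p ` J"
  proof
    fix q assume "q \<in> {q. ?G q \<noteq> 0}"
    hence "sum c {j\<in>J. p j = q} \<noteq> 0" using G[of q] by simp
    hence "{j\<in>J. p j = q} \<noteq> {}" by (metis sum.empty)
    then obtain j where "j \<in> J" "p j = q" by blast
    thus "q \<in> p ` J" by blast
  qed
  have "mult_map sc ?G = (\<Sum>q\<in>p ` J. sc (?G q) * (fst q * snd q))"
    by (rule mm_super[OF a _ sup]) (simp add: J)
  also have "\<dots> = (\<Sum>q\<in>p ` J. \<Sum>j\<in>{j\<in>J. p j = q}. sc (c j) * (fst (p j) * snd (p j)))"
  proof (rule sum.cong[OF refl])
    fix q assume "q \<in> p ` J"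
    have "sc (?G q) * (fst q * snd q) = (\<Sum>j\<in>{j\<in>J. p j = q}. sc (c j)) * (fst q * snd q)"
      using G[of q] by (simp only: sc_sum[OF a])
    also have "\<dots> = (\<Sum>j\<in>{j\<in>J. p j = q}. sc (c j) * (fst q * snd q))"
      by (simp add: sum_distrib_right)
    also have "\<dots> = (\<Sum>j\<in>{j\<in>J. p j = q}. sc (c j) * (fst (p j) * snd (p j)))"
      by (rule sum.cong) auto
    finally show "sc (?G q) * (fst q * snd q) = \<dots>" .
  qed
  also have "\<dots> = (\<Sum>j\<in>J. sc (c j) * (fst (p j) * snd (p j)))"
    by (rule sum.image_gen[OF J, of "\<lambda>j. sc (c j) * (fst (p j) * snd (p j))" p, symmetric])
  finally show ?thesis .
qed


locale fsetup =
  fixes sc :: "complex \<Rightarrow> 'b::ring_1" and A E :: "'b set" and n :: nat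
    and \<Phi> :: "(nat \<Rightarrow> 'b) \<Rightarrow> 'b"
  assumes alg: "cplx_algebra sc" and sub: "cplx_subalgebra sc A"
    and bij: "bij_betw \<Phi> (tuples A n) E"
    and Padd: "\<And>f g. f \<in> tuples A n \<Longrightarrow> g \<in> tuples A n \<Longrightarrow> \<Phi> (\<lambda>i. f i + g i) = \<Phi> f + \<Phi> g"
    and Psm: "\<And>f c. f \<in> tuples A n \<Longrightarrow> \<Phi> (\<lambda>i. sc c * f i) = sc c * \<Phi> f"
    and Pr: "\<And>f a. f \<in> tuples A n \<Longrightarrow> a \<in> A \<Longrightarrow> \<Phi> f * a = \<Phi> (\<lambda>i. f i * a)"
    and Pl: "\<And>f a. f \<in> tuples A n \<Longrightarrow> a \<in> A \<Longrightarrow> a * \<Phi> f = \<Phi> (\<lambda>i. a * f i)"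
begin

lemma one_A: "1 \<in> A" using sub by (simp add: cplx_subalgebra_def)
lemma add_A: "a \<in> A \<Longrightarrow> b \<in> A \<Longrightarrow> a + b \<in> A" using sub unfolding cplx_subalgebra_def by blast
lemma mul_A: "a \<in> A \<Longrightarrow> b \<in> A \<Longrightarrow> a * b \<in> A" using sub unfolding cplx_subalgebra_def by blast
lemma sm_A: "a \<in> A \<Longrightarrow> sc c * a \<in> A" using sub unfolding cplx_subalgebra_def by blast
lemma zero_A: "0 \<in> A" using sm_A[OF one_A, of 0] sc_zero[OF alg] by simp
lemma sum_A: "finite F \<Longrightarrow> (\<And>i. i \<in> F \<Longrightarrow> g i \<in> A) \<Longrightarrow> sum g F \<in> A"
  by (induct F rule: finite_induct) (auto intro: add_A zero_A)

abbreviation T where "T \<equiv> tuples A n"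
abbreviation Z where "Z \<equiv> centraliser A A"
abbreviation ZE where "ZE \<equiv> centraliser E A"

lemma T_add: "f \<in> T \<Longrightarrow> g \<in> T \<Longrightarrow> (\<lambda>i. f i + g i) \<in> T" by (auto simp: tuples_def add_A)
lemma T_rmul: "f \<in> T \<Longrightarrow> a \<in> A \<Longrightarrow> (\<lambda>i. f i * a) \<in> T" by (auto simp: tuples_def mul_A)
lemma T_lmul: "f \<in> T \<Longrightarrow> a \<in> A \<Longrightarrow> (\<lambda>i. a * f i) \<in> T" by (auto simp: tuples_def mul_A)
lemma T_zero: "(\<lambda>i. 0) \<in> T" by (simp add: tuples_def zero_A)
lemma inj: "inj_on \<Phi> T" using bij by (simp add: bij_betw_def)
lemma img: "\<Phi> ` T = E" using bij by (simp add: bij_betw_def)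
lemma Phi_E: "f \<in> T \<Longrightarrow> \<Phi> f \<in> E" using img by blast
lemma Phi_zero: "\<Phi> (\<lambda>i. 0) = 0" using Padd[OF T_zero T_zero] by simp

lemma Phi_sum: "finite F \<Longrightarrow> (\<And>k. k \<in> F \<Longrightarrow> g k \<in> T) \<Longrightarrow>
   (\<lambda>i. \<Sum>k\<in>F. g k i) \<in> T \<and> \<Phi> (\<lambda>i. \<Sum>k\<in>F. g k i) = (\<Sum>k\<in>F. \<Phi> (g k))"
proof (induct F rule: finite_induct)
  case empty thus ?case using T_zero Phi_zero by simp
next
  case (insert x F)
  hence IH: "(\<lambda>i. \<Sum>k\<in>F. g k i) \<in> T" "\<Phi> (\<lambda>i. \<Sum>k\<in>F. g k i) = (\<Sum>k\<in>F. \<Phi> (g k))" by auto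
  have gx: "g x \<in> T" using insert by auto
  have eq: "(\<lambda>i. \<Sum>k\<in>insert x F. g k i) = (\<lambda>i. g x i + (\<Sum>k\<in>F. g k i))" using insert by simp
  show ?case unfolding eq using T_add[OF gx IH(1)] Padd[OF gx IH(1)] IH(2) insert by simp
qed

definition unit :: "nat \<Rightarrow> nat \<Rightarrow> 'b" where "unit k = (\<lambda>j. if j = k then 1 else 0)"
definition u where "u k = \<Phi> (unit k)"
definition h where "h = inv_into T \<Phi>"

lemma unit_T: "k < n \<Longrightarrow> unit k \<in> T" by (auto simp: tuples_def unit_def one_A zero_A)

lemma decomp: assumes f: "f \<in> T" shows "\<Phi> f = (\<Sum>k<n. u k * f k)"
proof -
  have fA: "k < n \<Longrightarrow> f k \<in> A" for k using f by (simp add: tuples_def)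
  have "(\<Sum>k<n. u k * f k) = (\<Sum>k<n. \<Phi> (\<lambda>j. unit k j * f k))"
    by (rule sum.cong[OF refl]) (simp add: u_def Pr[OF unit_T fA])
  also have "\<dots> = \<Phi> (\<lambda>j. \<Sum>k<n. unit k j * f k)"
    using Phi_sum[of "{..<n}" "\<lambda>k j. unit k j * f k"] T_rmul[OF unit_T fA] by simp
  also have "(\<lambda>j. \<Sum>k<n. unit k j * f k) = f"
  proof
    fix j
    have "(\<Sum>k<n. unit k j * f k) = (\<Sum>k<n. if j = k then f k else 0)"
      by (rule sum.cong) (auto simp: unit_def)
    also have "\<dots> = f j" using f by (simp add: tuples_def)
    finally show "(\<Sum>k<n. unit k j * f k) = f j" .
  qed
  finally show ?thesis ..
qed

lemma tupZ_T: "tuples Z n \<subseteq> T" by (auto simp: tuples_def centraliser_def)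

lemma ZE_char: assumes f: "f \<in> T" shows "\<Phi> f \<in> ZE \<longleftrightarrow> f \<in> tuples Z n"
proof
  assume "\<Phi> f \<in> ZE"
  hence c: "\<And>a. a \<in> A \<Longrightarrow> \<Phi> f * a = a * \<Phi> f" by (auto simp: centraliser_def)
  have com: "f i * a = a * f i" if a: "a \<in> A" for a i
  proof -
    have "\<Phi> (\<lambda>i. f i * a) = \<Phi> (\<lambda>i. a * f i)" using c[OF a] Pr[OF f a] Pl[OF f a] by simp
    hence "(\<lambda>i. f i * a) = (\<lambda>i. a * f i)" using inj_onD[OF inj _ T_rmul[OF f a] T_lmul[OF f a]] by blast
    from fun_cong[OF this, of i] show ?thesis by simp
  qed
  show "f \<in> tuples Z n" using f com by (auto simp: tuples_def centraliser_def)
next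
  assume fz: "f \<in> tuples Z n"
  have "\<Phi> f * a = a * \<Phi> f" if a: "a \<in> A" for a
  proof -
    have "(\<lambda>i. f i * a) = (\<lambda>i. a * f i)"
    proof
      fix i show "f i * a = a * f i"
        using fz a by (cases "i < n") (auto simp: tuples_def centraliser_def)
    qed
    thus ?thesis using Pr[OF f a] Pl[OF f a] by simp
  qed
  thus "\<Phi> f \<in> ZE" using Phi_E[OF f] by (simp add: centraliser_def)
qed

lemma h_T: "e \<in> E \<Longrightarrow> h e \<in> T" unfolding h_def using img inv_into_into by metis
lemma Phi_h: "e \<in> E \<Longrightarrow> \<Phi> (h e) = e" unfolding h_def using img f_inv_into_f by metis
lemma h_Phi: "f \<in> T \<Longrightarrow> h (\<Phi> f) = f" unfolding h_def using inv_into_f_f[OF inj] by blast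
lemma ZE_E: "e \<in> ZE \<Longrightarrow> e \<in> E" by (simp add: centraliser_def)
lemma h_Z: "e \<in> ZE \<Longrightarrow> h e \<in> tuples Z n"
  using ZE_char[OF h_T[OF ZE_E]] Phi_h[OF ZE_E] by simp
lemma Z_A: "z \<in> Z \<Longrightarrow> z \<in> A" by (simp add: centraliser_def)
lemma unit_Z: "k < n \<Longrightarrow> unit k \<in> tuples Z n"
  by (auto simp: tuples_def unit_def centraliser_def one_A zero_A)
lemma u_ZE: "k < n \<Longrightarrow> u k \<in> ZE" unfolding u_def using ZE_char[OF unit_T] unit_Z by blast
lemma decomp_e: "e \<in> E \<Longrightarrow> e = (\<Sum>k<n. u k * h e k)"
  using decomp[OF h_T] Phi_h by metis

lemma E_zero: "0 \<in> E" using Phi_E[OF T_zero] Phi_zero by simp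
lemma E_add: "x \<in> E \<Longrightarrow> y \<in> E \<Longrightarrow> x + y \<in> E"
  using Padd[OF h_T h_T] Phi_h Phi_E[OF T_add[OF h_T h_T]] by metis
lemma E_rmul: "x \<in> E \<Longrightarrow> a \<in> A \<Longrightarrow> x * a \<in> E"
  using Pr[OF h_T] Phi_h Phi_E[OF T_rmul[OF h_T]] by metis
lemma E_sm: "x \<in> E \<Longrightarrow> sc c * x \<in> E"
proof -
  assume x: "x \<in> E"
  have "(\<lambda>i. sc c * h x i) \<in> T" using h_T[OF x] by (auto simp: tuples_def sm_A)
  thus ?thesis using Psm[OF h_T[OF x]] Phi_h[OF x] Phi_E by metis
qed
lemma E_sum: "finite F \<Longrightarrow> (\<And>i. i \<in> F \<Longrightarrow> g i \<in> E) \<Longrightarrow> sum g F \<in> E"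
  by (induct F rule: finite_induct) (auto intro: E_add E_zero)

lemma ZE_zero: "0 \<in> ZE" using E_zero by (simp add: centraliser_def)
lemma ZE_add: "x \<in> ZE \<Longrightarrow> y \<in> ZE \<Longrightarrow> x + y \<in> ZE"
  by (auto simp: centraliser_def E_add distrib_left distrib_right)
lemma ZE_mulZ: assumes x: "x \<in> ZE" and z: "z \<in> Z" shows "x * z \<in> ZE"
proof -
  have "x * z \<in> E" using E_rmul[OF ZE_E[OF x] Z_A[OF z]] .
  moreover have "x * z * a = a * (x * z)" if a: "a \<in> A" for a
  proof -
    have "x * z * a = x * (z * a)" by (simp add: mult.assoc)
    also have "\<dots> = x * (a * z)" using z a by (simp add: centraliser_def)
    also have "\<dots> = (x * a) * z" by (simp add: mult.assoc)
    also have "\<dots> = (a * x) * z" using x a by (simp add: centraliser_def)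
    finally show ?thesis by (simp add: mult.assoc)
  qed
  ultimately show ?thesis by (simp add: centraliser_def)
qed
lemma ZE_sum: "finite F \<Longrightarrow> (\<And>i. i \<in> F \<Longrightarrow> g i \<in> ZE) \<Longrightarrow> sum g F \<in> ZE"
  by (induct F rule: finite_induct) (auto intro: ZE_add ZE_zero)

lemma fgp: "fg_projective Z ZE"
  unfolding fg_projective_def
proof (intro exI conjI ballI)
  show "\<And>x. x \<in> ZE \<Longrightarrow> h x \<in> tuples Z n" by (rule h_Z)
  show "\<And>f. f \<in> tuples Z n \<Longrightarrow> \<Phi> f \<in> ZE" using ZE_char tupZ_T by blast
  show "h (x + y) = (\<lambda>i. h x i + h y i)" if "x \<in> ZE" "y \<in> ZE" for x y
  proof -
    have hx: "h x \<in> T" "h y \<in> T" using that h_T ZE_E by auto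
    have "\<Phi> (\<lambda>i. h x i + h y i) = x + y" using Padd[OF hx] Phi_h ZE_E that by simp
    thus ?thesis using h_Phi[OF T_add[OF hx]] by simp
  qed
  show "h (x * z) = (\<lambda>i. h x i * z)" if "x \<in> ZE" "z \<in> Z" for x z
  proof -
    have hx: "h x \<in> T" using that h_T ZE_E by auto
    have "\<Phi> (\<lambda>i. h x i * z) = x * z" using Pr[OF hx Z_A] Phi_h ZE_E that by simp
    thus ?thesis using h_Phi[OF T_rmul[OF hx Z_A[OF that(2)]]] by simp
  qed
  show "\<Phi> (\<lambda>i. f i + g i) = \<Phi> f + \<Phi> g" if "f \<in> tuples Z n" "g \<in> tuples Z n" for f g
    using Padd that tupZ_T by blast
  show "\<Phi> (\<lambda>i. f i * z) = \<Phi> f * z" if "f \<in> tuples Z n" "z \<in> Z" for f z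
    using Pr that tupZ_T Z_A by (metis subsetD)
  show "\<Phi> (h x) = x" if "x \<in> ZE" for x using Phi_h ZE_E that by blast
qed

end

context fsetup
begin

abbreviation Sp where "Sp \<equiv> tensor_rel_span sc Z ZE A"
abbreviation Rl where "Rl \<equiv> tensor_rels sc Z ZE A"

lemma Sp_zero: "(\<lambda>q. 0) \<in> Sp"
  unfolding tensor_rel_span_def by (rule CollectI, rule exI[of _ 0]) simp

lemma Sp_step: assumes x: "x \<in> Sp" and g: "g \<in> Rl" shows "(\<lambda>q. x q + d * g q) \<in> Sp"
proof -
  have "\<exists>(m::nat) c G. (\<forall>k<m. G k \<in> Rl) \<and> x = (\<lambda>q. \<Sum>k<m. c k * G k q)"
    using x unfolding tensor_rel_span_def by simp
  then obtain m :: nat and c G where G: "\<forall>k<m. G k \<in> Rl" and xd: "x = (\<lambda>q. \<Sum>k<m. c k * G k q)"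
    by blast
  have "\<forall>k<Suc m. (G(m:=g)) k \<in> Rl" using G g by auto
  moreover have "(\<lambda>q. x q + d * g q) = (\<lambda>q. \<Sum>k<Suc m. (c(m:=d)) k * (G(m:=g)) k q)"
  proof
    fix q
    have "(\<Sum>k<m. (c(m:=d)) k * (G(m:=g)) k q) = (\<Sum>k<m. c k * G k q)"
      by (rule sum.cong) auto
    thus "x q + d * g q = (\<Sum>k<Suc m. (c(m:=d)) k * (G(m:=g)) k q)"
      by (simp add: xd)
  qed
  ultimately show ?thesis unfolding tensor_rel_span_def
    by (intro CollectI exI[of _ "Suc m"] exI[of _ "c(m:=d)"] exI[of _ "G(m:=g)"] conjI)
qed

lemma Sp_rel: "g \<in> Rl \<Longrightarrow> g \<in> Sp"
  using Sp_step[OF Sp_zero, of g 1] by simp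

lemma Sp_add: assumes x: "x \<in> Sp" and y: "y \<in> Sp" shows "(\<lambda>q. x q + y q) \<in> Sp"
proof -
  have "\<exists>(m::nat) c G. (\<forall>k<m. G k \<in> Rl) \<and> y = (\<lambda>q. \<Sum>k<m. c k * G k q)"
    using y unfolding tensor_rel_span_def by simp
  then obtain m :: nat and c G where G: "\<forall>k<m. G k \<in> Rl" and yd: "y = (\<lambda>q. \<Sum>k<m. c k * G k q)"
    by blast
  have "\<forall>k<m. G k \<in> Rl \<Longrightarrow> (\<lambda>q. x q + (\<Sum>k<m. c k * G k q)) \<in> Sp" for m
  proof (induct m)
    case 0 thus ?case using x by simp
  next
    case (Suc m)
    hence "(\<lambda>q. x q + (\<Sum>k<m. c k * G k q)) \<in> Sp" by simp
    from Sp_step[OF this, of "G m" "c m"] Suc.prems show ?case by (simp add: add.assoc)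
  qed
  thus ?thesis using G yd by simp
qed

lemma Sp_scale: assumes x: "x \<in> Sp" shows "(\<lambda>q. d * x q) \<in> Sp"
proof -
  have "\<exists>(m::nat) c G. (\<forall>k<m. G k \<in> Rl) \<and> x = (\<lambda>q. \<Sum>k<m. c k * G k q)"
    using x unfolding tensor_rel_span_def by simp
  then obtain m :: nat and c G where G: "\<forall>k<m. G k \<in> Rl" and xd: "x = (\<lambda>q. \<Sum>k<m. c k * G k q)"
    by blast
  have "(\<lambda>q. d * x q) = (\<lambda>q. \<Sum>k<m. (d * c k) * G k q)"
    by (simp add: xd sum_distrib_left mult.assoc)
  thus ?thesis using G unfolding tensor_rel_span_def
    by (intro CollectI exI[of _ m] exI[of _ "\<lambda>k. d * c k"] exI[of _ G] conjI)
qed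

definition eqv where "eqv x y \<longleftrightarrow> (\<lambda>q. x q - y q) \<in> Sp"

lemma eqv_refl: "eqv x x" unfolding eqv_def using Sp_zero by simp
lemma eqv_sym: assumes "eqv x y" shows "eqv y x"
proof -
  have "(\<lambda>q. (-1) * (x q - y q)) \<in> Sp" using Sp_scale assms unfolding eqv_def by blast
  thus ?thesis unfolding eqv_def by simp
qed
lemma eqv_trans: assumes "eqv x y" "eqv y z" shows "eqv x z"
proof -
  have "(\<lambda>q. (x q - y q) + (y q - z q)) \<in> Sp" using Sp_add assms unfolding eqv_def by blast
  thus ?thesis unfolding eqv_def by simp
qed
lemma eqv_add: assumes "eqv x1 y1" "eqv x2 y2"
  shows "eqv (\<lambda>q. x1 q + x2 q) (\<lambda>q. y1 q + y2 q)"
proof -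
  have "(\<lambda>q. (x1 q - y1 q) + (x2 q - y2 q)) \<in> Sp" using Sp_add assms unfolding eqv_def by blast
  thus ?thesis unfolding eqv_def by (simp add: algebra_simps)
qed
lemma eqv_scale: assumes "eqv x y" shows "eqv (\<lambda>q. d * x q) (\<lambda>q. d * y q)"
proof -
  have "(\<lambda>q. d * (x q - y q)) \<in> Sp" using Sp_scale assms unfolding eqv_def by blast
  thus ?thesis unfolding eqv_def by (simp add: algebra_simps)
qed
lemma eqv_sum: "finite F \<Longrightarrow> (\<And>i. i \<in> F \<Longrightarrow> eqv (x i) (y i)) \<Longrightarrow>
   eqv (\<lambda>q. \<Sum>i\<in>F. x i q) (\<lambda>q. \<Sum>i\<in>F. y i q)"
proof (induct F rule: finite_induct)
  case empty thus ?case using eqv_refl by simp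
next
  case (insert a F)
  have "eqv (\<lambda>q. x a q + (\<Sum>i\<in>F. x i q)) (\<lambda>q. y a q + (\<Sum>i\<in>F. y i q))"
    using eqv_add[of "x a" "y a"] insert by simp
  thus ?case using insert by simp
qed
lemma eqv_Sp: "eqv x (\<lambda>q. 0) \<Longrightarrow> x \<in> Sp" unfolding eqv_def by simp

lemma R1: assumes "e \<in> ZE" "e' \<in> ZE" "a \<in> A"
  shows "eqv (pt (e + e', a)) (\<lambda>q. pt (e, a) q + pt (e', a) q)"
proof -
  have "(\<lambda>q. pt (e + e', a) q - pt (e, a) q - pt (e', a) q) \<in> Rl"
    unfolding tensor_rels_def using assms by blast
  from Sp_rel[OF this] show ?thesis unfolding eqv_def by (simp add: diff_diff_eq)
qed

lemma R2: assumes "e \<in> ZE" "a \<in> A" "a' \<in> A"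
  shows "eqv (\<lambda>q. pt (e, a) q + pt (e, a') q) (pt (e, a + a'))"
proof -
  have "(\<lambda>q. pt (e, a + a') q - pt (e, a) q - pt (e, a') q) \<in> Rl"
    unfolding tensor_rels_def using assms by blast
  from Sp_scale[OF Sp_rel[OF this], of "-1"] show ?thesis unfolding eqv_def
    by (simp add: algebra_simps)
qed

lemma R4: assumes "e \<in> ZE" "a \<in> A"
  shows "eqv (\<lambda>q. c * pt (e, a) q) (pt (e, sc c * a))"
proof -
  have "(\<lambda>q. pt (e, sc c * a) q - c * pt (e, a) q) \<in> Rl"
    unfolding tensor_rels_def using assms by blast
  from Sp_scale[OF Sp_rel[OF this], of "-1"] show ?thesis unfolding eqv_def
    by (simp add: algebra_simps)
qed

lemma R5: assumes "e \<in> ZE" "z \<in> Z" "a \<in> A"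
  shows "eqv (pt (e * z, a)) (pt (e, z * a))"
proof -
  have "(\<lambda>q. pt (e * z, a) q - pt (e, z * a) q) \<in> Rl"
    unfolding tensor_rels_def using assms by blast
  from Sp_rel[OF this] show ?thesis unfolding eqv_def by simp
qed

lemma Rz1: assumes "a \<in> A" shows "eqv (pt (0, a)) (\<lambda>q. 0)"
proof -
  have "(\<lambda>q. pt (0 + 0, a) q - pt (0, a) q - pt (0, a) q) \<in> Rl"
    unfolding tensor_rels_def using assms ZE_zero by blast
  from Sp_scale[OF Sp_rel[OF this], of "-1"] show ?thesis unfolding eqv_def
    by (simp add: algebra_simps)
qed

lemma Rz2: assumes "e \<in> ZE" shows "eqv (pt (e, 0)) (\<lambda>q. 0)"
proof -
  have "(\<lambda>q. pt (e, 0 + 0) q - pt (e, 0) q - pt (e, 0) q) \<in> Rl"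
    unfolding tensor_rels_def using assms zero_A by blast
  from Sp_scale[OF Sp_rel[OF this], of "-1"] show ?thesis unfolding eqv_def
    by (simp add: algebra_simps)
qed

end

context fsetup
begin

lemma L1: "finite F \<Longrightarrow> (\<And>i. i \<in> F \<Longrightarrow> w i \<in> ZE) \<Longrightarrow> b \<in> A \<Longrightarrow>
   eqv (pt (\<Sum>i\<in>F. w i, b)) (\<lambda>q. \<Sum>i\<in>F. pt (w i, b) q)"
proof (induct F rule: finite_induct)
  case empty thus ?case using Rz1 by simp
next
  case (insert x F)
  have wx: "w x \<in> ZE" and wF: "(\<Sum>i\<in>F. w i) \<in> ZE" using insert ZE_sum by auto
  have IH: "eqv (pt (\<Sum>i\<in>F. w i, b)) (\<lambda>q. \<Sum>i\<in>F. pt (w i, b) q)" using insert by auto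
  have q1: "eqv (pt (w x + (\<Sum>i\<in>F. w i), b)) (\<lambda>q. pt (w x, b) q + pt (\<Sum>i\<in>F. w i, b) q)"
    by (rule R1[OF wx wF insert(5)])
  have q2: "eqv (\<lambda>q. pt (w x, b) q + pt (\<Sum>i\<in>F. w i, b) q) (\<lambda>q. pt (w x, b) q + (\<Sum>i\<in>F. pt (w i, b) q))"
    by (rule eqv_add[OF eqv_refl IH])
  from eqv_trans[OF q1 q2] show ?case using insert by simp
qed

lemma Lpt: assumes e: "e \<in> ZE" and b: "b \<in> A"
  shows "eqv (\<lambda>q. c * pt (e, b) q) (\<lambda>q. \<Sum>i<n. pt (u i, h e i * (sc c * b)) q)"
proof -
  have b': "sc c * b \<in> A" using sm_A b .
  have q1: "eqv (\<lambda>q. c * pt (e, b) q) (pt (e, sc c * b))" by (rule R4[OF e b])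
  have ed: "e = (\<Sum>i<n. u i * h e i)" using decomp_e ZE_E e by blast
  have hz: "i < n \<Longrightarrow> h e i \<in> Z" for i using h_Z[OF e] by (simp add: tuples_def)
  have q2: "eqv (pt (\<Sum>i<n. u i * h e i, sc c * b)) (\<lambda>q. \<Sum>i<n. pt (u i * h e i, sc c * b) q)"
    by (rule L1) (auto intro: ZE_mulZ u_ZE hz b')
  have q2b: "eqv (pt (e, sc c * b)) (\<lambda>q. \<Sum>i<n. pt (u i * h e i, sc c * b) q)"
    using q2 by (simp only: ed[symmetric])
  have q3: "eqv (\<lambda>q. \<Sum>i<n. pt (u i * h e i, sc c * b) q) (\<lambda>q. \<Sum>i<n. pt (u i, h e i * (sc c * b)) q)"
    by (rule eqv_sum) (auto intro: R5 u_ZE hz b')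
  show ?thesis using eqv_trans[OF q1 eqv_trans[OF q2b q3]] .
qed

lemma L2: "finite S \<Longrightarrow> (\<And>p i. p \<in> S \<Longrightarrow> i < n \<Longrightarrow> y p i \<in> A) \<Longrightarrow>
   eqv (\<lambda>q. \<Sum>p\<in>S. \<Sum>i<n. pt (u i, y p i) q) (\<lambda>q. \<Sum>i<n. pt (u i, \<Sum>p\<in>S. y p i) q)"
proof (induct S rule: finite_induct)
  case empty
  have "eqv (\<lambda>q. \<Sum>i<n. pt (u i, 0) q) (\<lambda>q. \<Sum>i<n. (\<lambda>q. 0::complex) q)"
    by (rule eqv_sum) (auto intro: Rz2 u_ZE)
  hence "eqv (\<lambda>q. \<Sum>i<n. pt (u i, 0) q) (\<lambda>q. 0)" by simp
  hence "eqv (\<lambda>q. 0) (\<lambda>q. \<Sum>i<n. pt (u i, 0) q)" by (rule eqv_sym)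
  thus ?case by simp
next
  case (insert x F)
  let ?Y = "\<lambda>i. \<Sum>p\<in>F. y p i"
  have IH: "eqv (\<lambda>q. \<Sum>p\<in>F. \<Sum>i<n. pt (u i, y p i) q) (\<lambda>q. \<Sum>i<n. pt (u i, ?Y i) q)"
    using insert by auto
  have yA: "i < n \<Longrightarrow> y x i \<in> A" for i using insert by auto
  have YA: "i < n \<Longrightarrow> ?Y i \<in> A" for i using insert by (auto intro: sum_A)
  have q1: "eqv (\<lambda>q. (\<Sum>i<n. pt (u i, y x i) q) + (\<Sum>p\<in>F. \<Sum>i<n. pt (u i, y p i) q))
               (\<lambda>q. (\<Sum>i<n. pt (u i, y x i) q) + (\<Sum>i<n. pt (u i, ?Y i) q))"
    by (rule eqv_add[OF eqv_refl IH])
  have q2: "eqv (\<lambda>q. \<Sum>i<n. (pt (u i, y x i) q + pt (u i, ?Y i) q)) (\<lambda>q. \<Sum>i<n. pt (u i, y x i + ?Y i) q)"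
    by (rule eqv_sum) (auto intro: R2 u_ZE yA YA)
  have q2b: "eqv (\<lambda>q. (\<Sum>i<n. pt (u i, y x i) q) + (\<Sum>i<n. pt (u i, ?Y i) q)) (\<lambda>q. \<Sum>i<n. pt (u i, y x i + ?Y i) q)"
    using q2 by (simp add: sum.distrib)
  from eqv_trans[OF q1 q2b] show ?case using insert by simp
qed

lemma term_id: assumes e: "e \<in> E"
  shows "sc c * (e * b) = (\<Sum>i<n. u i * (h e i * (sc c * b)))"
proof -
  have "sc c * (e * b) = sc c * ((\<Sum>i<n. u i * h e i) * b)" by (simp only: decomp_e[OF e, symmetric])
  also have "\<dots> = (\<Sum>i<n. sc c * (u i * h e i * b))" by (simp add: sum_distrib_left sum_distrib_right)
  also have "\<dots> = (\<Sum>i<n. u i * (h e i * (sc c * b)))"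
  proof (rule sum.cong[OF refl])
    fix i
    have "sc c * (u i * h e i) = (u i * h e i) * sc c" by (rule sc_central[OF alg])
    thus "sc c * (u i * h e i * b) = u i * (h e i * (sc c * b))" by (metis mult.assoc)
  qed
  finally show ?thesis .
qed

lemma sc1: "sc 1 = 1" using alg unfolding cplx_algebra_def by blast

lemma tiso: "tensor_map_iso sc Z ZE A E"
  unfolding tensor_map_iso_def
proof (intro conjI ballI impI)
  show "mult_map sc ` free_vs ZE A = E"
  proof
    show "mult_map sc ` free_vs ZE A \<subseteq> E"
    proof
      fix x assume "x \<in> mult_map sc ` free_vs ZE A"
      then obtain f where f: "f \<in> free_vs ZE A" and x: "x = mult_map sc f" by blast
      have fin: "finite {p. f p \<noteq> 0}" and sub: "{p. f p \<noteq> 0} \<subseteq> ZE \<times> A"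
        using f by (auto simp: free_vs_def)
      have "mult_map sc f \<in> E" unfolding mult_map_def
      proof (rule E_sum[OF fin])
        fix p assume "p \<in> {p. f p \<noteq> 0}"
        hence "fst p \<in> ZE" "snd p \<in> A" using sub by auto
        thus "sc (f p) * (fst p * snd p) \<in> E" by (intro E_sm E_rmul ZE_E)
      qed
      thus "x \<in> E" using x by simp
    qed
    show "E \<subseteq> mult_map sc ` free_vs ZE A"
    proof
      fix x assume x: "x \<in> E"
      define g where "g = (\<lambda>q. \<Sum>i<n. 1 * pt (u i, h x i) q)"
      have sup: "{q. g q \<noteq> 0} \<subseteq> (\<lambda>i. (u i, h x i)) ` {..<n}"
      proof
        fix q assume "q \<in> {q. g q \<noteq> 0}"
        hence gq: "g q \<noteq> 0" by simp
        have "\<exists>i\<in>{..<n}. pt (u i, h x i) q \<noteq> 0"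
        proof (rule ccontr)
          assume "\<not> (\<exists>i\<in>{..<n}. pt (u i, h x i) q \<noteq> 0)"
          hence "\<forall>i\<in>{..<n}. 1 * pt (u i, h x i) q = 0" by simp
          hence "g q = 0" unfolding g_def by (rule sum.neutral)
          thus False using gq by simp
        qed
        then obtain i where i: "i < n" "pt (u i, h x i) q \<noteq> 0" by blast
        hence "q = (u i, h x i)" unfolding pt_def by (cases "q = (u i, h x i)") simp_all
        thus "q \<in> (\<lambda>i. (u i, h x i)) ` {..<n}" using i(1) by blast
      qed
      have sub2: "(\<lambda>i. (u i, h x i)) ` {..<n} \<subseteq> ZE \<times> A"
      proof
        fix q assume "q \<in> (\<lambda>i. (u i, h x i)) ` {..<n}"
        then obtain i where "i < n" "q = (u i, h x i)" by blast
        moreover have "h x i \<in> A" using h_T[OF x] \<open>i < n\<close> by (simp add: tuples_def)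
        ultimately show "q \<in> ZE \<times> A" using u_ZE by simp
      qed
      have fin: "finite {q. g q \<noteq> 0}" by (rule finite_subset[OF sup]) simp
      have gf: "g \<in> free_vs ZE A" unfolding free_vs_def using fin sup sub2 by blast
      have "mult_map sc g = (\<Sum>i<n. sc 1 * (u i * h x i))"
        unfolding g_def by (subst mm_lin[OF alg]) simp_all
      also have "\<dots> = x" using decomp_e[OF x] sc1 by simp
      finally show "x \<in> mult_map sc ` free_vs ZE A" using gf by (metis rev_image_eqI)
    qed
  qed
next
  fix f assume f: "f \<in> free_vs ZE A" and m0: "mult_map sc f = 0"
  define S where "S = {p. f p \<noteq> 0}"
  have fin: "finite S" and sub: "S \<subseteq> ZE \<times> A" using f by (auto simp: free_vs_def S_def)
  have f_eq: "f = (\<lambda>q. \<Sum>p\<in>S. f p * pt p q)"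
  proof
    fix q
    have "(\<Sum>p\<in>S. f p * pt p q) = (\<Sum>p\<in>S. if q = p then f p else 0)"
      by (rule sum.cong) (auto simp: pt_def)
    also have "\<dots> = f q" using fin by (simp add: S_def)
    finally show "f q = (\<Sum>p\<in>S. f p * pt p q)" by simp
  qed
  define yv where "yv p i = h (fst p) i * (sc (f p) * snd p)" for p i
  define \<beta> where "\<beta> i = (\<Sum>p\<in>S. yv p i)" for i
  have yA: "yv p i \<in> A" if "p \<in> S" "i < n" for p i
  proof -
    have "h (fst p) \<in> T" using that sub h_T ZE_E by auto
    hence "h (fst p) i \<in> A" using that by (simp add: tuples_def)
    moreover have "snd p \<in> A" using that sub by auto
    ultimately show ?thesis unfolding yv_def by (intro mul_A sm_A)
  qed
  have s1: "eqv f (\<lambda>q. \<Sum>p\<in>S. \<Sum>i<n. pt (u i, yv p i) q)"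
  proof -
    have "eqv (\<lambda>q. \<Sum>p\<in>S. f p * pt p q) (\<lambda>q. \<Sum>p\<in>S. \<Sum>i<n. pt (u i, yv p i) q)"
    proof (rule eqv_sum[OF fin])
      fix p assume p: "p \<in> S"
      have "fst p \<in> ZE" "snd p \<in> A" using p sub by auto
      from Lpt[OF this, of "f p"] show "eqv (\<lambda>q. f p * pt p q) (\<lambda>q. \<Sum>i<n. pt (u i, yv p i) q)"
        by (simp add: yv_def)
    qed
    thus ?thesis using f_eq by simp
  qed
  have s2: "eqv (\<lambda>q. \<Sum>p\<in>S. \<Sum>i<n. pt (u i, yv p i) q) (\<lambda>q. \<Sum>i<n. pt (u i, \<beta> i) q)"
    unfolding \<beta>_def by (rule L2[OF fin]) (rule yA)
  have \<beta>A: "i < n \<Longrightarrow> \<beta> i \<in> A" for i unfolding \<beta>_def using fin yA by (auto intro: sum_A)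
  have "mult_map sc f = (\<Sum>p\<in>S. sc (f p) * (fst p * snd p))" by (simp add: mult_map_def S_def)
  also have "\<dots> = (\<Sum>p\<in>S. \<Sum>i<n. u i * yv p i)"
  proof (rule sum.cong[OF refl])
    fix p assume "p \<in> S"
    hence "fst p \<in> E" using sub ZE_E by auto
    from term_id[OF this] show "sc (f p) * (fst p * snd p) = (\<Sum>i<n. u i * yv p i)"
      by (simp add: yv_def)
  qed
  also have "\<dots> = (\<Sum>i<n. u i * \<beta> i)"
    unfolding \<beta>_def sum_distrib_left by (rule sum.swap)
  finally have bs: "(\<Sum>i<n. u i * \<beta> i) = 0" using m0 by simp
  define \<beta>t where "\<beta>t i = (if i < n then \<beta> i else 0)" for i
  have \<beta>tT: "\<beta>t \<in> T" using \<beta>A by (simp add: \<beta>t_def tuples_def zero_A)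
  have "\<Phi> \<beta>t = (\<Sum>i<n. u i * \<beta>t i)" by (rule decomp[OF \<beta>tT])
  also have "\<dots> = (\<Sum>i<n. u i * \<beta> i)" by (rule sum.cong) (auto simp: \<beta>t_def)
  finally have "\<Phi> \<beta>t = \<Phi> (\<lambda>i. 0)" using bs Phi_zero by simp
  hence bt0: "\<beta>t = (\<lambda>i. 0)" using inj_onD[OF inj _ \<beta>tT T_zero] by blast
  have b0: "\<beta> i = 0" if "i < n" for i
  proof -
    have "\<beta>t i = 0" using bt0 by simp
    thus ?thesis using that unfolding \<beta>t_def by simp
  qed
  have s3: "eqv (\<lambda>q. \<Sum>i<n. pt (u i, \<beta> i) q) (\<lambda>q. \<Sum>i<n. (\<lambda>q. 0::complex) q)"
    by (rule eqv_sum) (auto simp: b0 intro: Rz2 u_ZE)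
  have "eqv f (\<lambda>q. 0)" using eqv_trans[OF s1 eqv_trans[OF s2 s3]] by simp
  thus "f \<in> tensor_rel_span sc Z ZE A" by (rule eqv_Sp)
qed

end


theorem corollary4p18:
  fixes sc :: "complex \<Rightarrow> 'b::ring_1" and A :: "'b set" and \<delta> :: "'b \<Rightarrow> 'b" and n :: nat
  assumes "cplx_algebra sc"
    and "cplx_subalgebra sc A"
    and "cderivation sc A \<delta>"
    and "free_std_bimodule sc A (one_forms sc A \<delta>) n"
  shows "assumption_III sc A (one_forms sc A \<delta>)"
proof -
  obtain \<Phi> where B: "bij_betw \<Phi> (tuples A n) (one_forms sc A \<delta>)"
    and P1: "\<forall>f\<in>tuples A n. \<forall>g\<in>tuples A n. \<Phi> (\<lambda>i. f i + g i) = \<Phi> f + \<Phi> g"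
    and P2: "\<forall>f\<in>tuples A n. \<forall>c. \<Phi> (\<lambda>i. sc c * f i) = sc c * \<Phi> f"
    and P3: "\<forall>f\<in>tuples A n. \<forall>a\<in>A. \<Phi> f * a = \<Phi> (\<lambda>i. f i * a)"
    and P4: "\<forall>f\<in>tuples A n. \<forall>a\<in>A. a * \<Phi> f = \<Phi> (\<lambda>i. a * f i)"
    using assms(4) unfolding free_std_bimodule_def by blast
  interpret fsetup sc A "one_forms sc A \<delta>" n \<Phi>
    using assms(1,2) B P1 P2 P3 P4 by unfold_locales auto
  show ?thesis unfolding assumption_III_def using fgp tiso by blast
qed

end
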